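(* Let $F$ be a field and $n\ge 2$ an integer. Then the matrix ring $\mathbb{M}_n(F)$ does not have the $2$-nil-sum property.
   Context: All rings are associative with identity. A central unit of $R$ is a unit of $R$ lying in the center of $R$; a non central-unit is an element that is not a central unit. A ring $R$ has the $2$-nil-sum property if every non central-unit of $R$ is a sum of two nilpotent elements of $R$. *)

theory Defs
  imports "Jordan_Normal_Form.Matrix" "HOL-Algebra.Ring"
begin

definition nilpotent_elem :: "('a, 'b) ring_scheme \<Rightarrow> 'a \<Rightarrow> bool" where
  "nilpotent_elem R x \<longleftrightarrow> x \<in> carrier R \<and> (\<exists>k::nat. x [^]\<^bsub>R\<^esub> k = \<zero>\<^bsub>R\<^esub>)"

definition central_unit :: "('a, 'b) ring_scheme \<Rightarrow> 'a \<Rightarrow> bool" where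
  "central_unit R x \<longleftrightarrow> x \<in> Units R \<and> (\<forall>y\<in>carrier R. x \<otimes>\<^bsub>R\<^esub> y = y \<otimes>\<^bsub>R\<^esub> x)"

definition two_nil_sum :: "('a, 'b) ring_scheme \<Rightarrow> bool" where
  "two_nil_sum R \<longleftrightarrow>
     (\<forall>x\<in>carrier R. \<not> central_unit R x \<longrightarrow>
        (\<exists>a b. nilpotent_elem R a \<and> nilpotent_elem R b \<and> x = a \<oplus>\<^bsub>R\<^esub> b))"

end

theory Submission imports Defs "Jordan_Normal_Form.Determinant" begin

lemma prod_lin_coeff:
  fixes c d :: "'b \<Rightarrow> 'a::comm_ring_1"
  assumes "finite S"
  shows "coeff (\<Prod>i\<in>S. [:c i, d i:]) 0 = (\<Prod>i\<in>S. c i) \<and>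
         coeff (\<Prod>i\<in>S. [:c i, d i:]) 1 = (\<Sum>j\<in>S. d j * (\<Prod>i\<in>S-{j}. c i))"
  using assms
proof (induction S rule: finite_induct)
  case empty then show ?case by simp
next
  case (insert x F)
  have e: "(\<Sum>j\<in>F. d j * (\<Prod>i\<in>insert x F - {j}. c i)) = c x * (\<Sum>j\<in>F. d j * (\<Prod>i\<in>F-{j}. c i))"
    unfolding sum_distrib_left
  proof (rule sum.cong)
    fix j assume "j \<in> F"
    then have "insert x F - {j} = insert x (F - {j})" using insert by auto
    then show "d j * (\<Prod>i\<in>insert x F - {j}. c i) = c x * (d j * (\<Prod>i\<in>F-{j}. c i))"
      using insert by (simp add: ac_simps)
  qed simp
  have f: "insert x F - {x} = F" using insert by auto
  show ?case using insert e f
    by (simp add: coeff_mult numeral_eq_Suc algebra_simps)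
qed

lemma signof_poly_mult: "(signof p :: 'a::comm_ring_1 poly) * q = smult (signof p) q"
  by (cases p rule: sign_cases) simp_all


lemma det_coeff1:
  fixes A :: "'a::comm_ring_1 mat" and n :: nat
  defines "M \<equiv> mat n n (\<lambda>(i,j). [:of_bool (i=j), - A $$ (i,j):])"
  shows "coeff (det M) 1 = - (\<Sum>i<n. A $$ (i,i))"
proof -
  let ?P = "{p. p permutes {0..<n}}"
  have M: "M \<in> carrier_mat n n" unfolding M_def by simp
  have trm: "coeff (signof p * (\<Prod>i = 0..<n. M $$ (i, p i))) 1 =
     (if p = id then - (\<Sum>i<n. A $$ (i,i)) else 0)" if p: "p permutes {0..<n}" for p
  proof -
    have lt: "i < n \<Longrightarrow> p i < n" for i using p permutes_in_image by fastforce
    have "(\<Prod>i = 0..<n. M $$ (i, p i)) = (\<Prod>i = 0..<n. [:of_bool (i = p i), - A $$ (i, p i):])"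
      by (rule prod.cong, auto simp: M_def lt)
    then have "coeff (signof p * (\<Prod>i = 0..<n. M $$ (i, p i))) 1 =
      signof p * (\<Sum>j\<in>{0..<n}. - A $$ (j, p j) * (\<Prod>i\<in>{0..<n}-{j}. of_bool (i = p i)))"
      using prod_lin_coeff[of "{0..<n}" "\<lambda>i. of_bool (i = p i)" "\<lambda>i. - A $$ (i, p i)"]
      by (simp add: signof_poly_mult)
    also have "\<dots> = (if p = id then - (\<Sum>i<n. A $$ (i,i)) else 0)"
    proof (cases "p = id")
      case True
      then show ?thesis by (simp add: sum_negf atLeast0LessThan)
    next
      case False
      then obtain i0 where i0: "p i0 \<noteq> i0" by (metis eq_id_iff)
      then have i0n: "i0 < n" using p permutes_not_in by fastforce
      have z: "(\<Prod>i\<in>{0..<n}-{j}. of_bool (i = p i) :: 'a) = 0" if "j < n" for j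
      proof -
        have "\<exists>i\<in>{0..<n}-{j}. p i \<noteq> i"
        proof (cases "i0 = j")
          case False then show ?thesis using i0 i0n by auto
        next
          case True
          have "p (p j) \<noteq> p j" using i0 True permutes_inj[OF p] by (metis injD)
          moreover have "p j \<noteq> j" using i0 True by simp
          ultimately show ?thesis using lt[OF \<open>j<n\<close>] by auto
        qed
        then obtain i where "i \<in> {0..<n}-{j}" "p i \<noteq> i" by blast
        then show ?thesis by (intro prod_zero) force+
      qed
      show ?thesis using False z by simp
    qed
    finally show ?thesis .
  qed
  have "coeff (det M) 1 = (\<Sum>p\<in>?P. coeff (signof p * (\<Prod>i = 0..<n. M $$ (i, p i))) 1)"
    unfolding det_def'[OF M] by (simp add: coeff_sum)
  also have "\<dots> = (\<Sum>p\<in>?P. (if p = id then - (\<Sum>i<n. A $$ (i,i)) else 0))"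
    by (rule sum.cong[OF refl], rule trm, simp)
  also have "\<dots> = - (\<Sum>i<n. A $$ (i,i))"
    by (simp add: sum.delta' permutes_id finite_permutations)
  finally show ?thesis .
qed


lemma (in ring) nil_right_inv:
  assumes a: "a \<in> carrier R" and b: "b \<in> carrier R" and ab: "a \<oplus> b = \<one>"
    and bk: "b [^] (k::nat) = \<zero>"
  shows "\<exists>c\<in>carrier R. a \<otimes> c = \<one>"
proof -
  have ax: "a \<otimes> x = x \<ominus> b \<otimes> x" if x: "x \<in> carrier R" for x
  proof -
    have "a \<otimes> x \<oplus> b \<otimes> x = x" using ab a b x by (metis l_distr l_one)
    then show ?thesis using a b x
      by (metis add.inv_solve_right' m_closed minus_eq)
  qed
  have "a \<otimes> (\<Oplus>i\<in>{..<m}. b [^] i) = \<one> \<ominus> b [^] m" for m :: nat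
  proof (induction m)
    case 0 then show ?case by (simp add: a r_neg minus_eq)
  next
    case (Suc m)
    have s: "(\<Oplus>i\<in>{..<Suc m}. b [^] i) = b [^] m \<oplus> (\<Oplus>i\<in>{..<m}. b [^] i)"
      using b by (simp add: lessThan_Suc finsum_insert)
    have "a \<otimes> (\<Oplus>i\<in>{..<Suc m}. b [^] i) = a \<otimes> b [^] m \<oplus> (\<one> \<ominus> b [^] m)"
      unfolding s using Suc a b by (simp add: r_distr)
    also have "\<dots> = (b [^] m \<ominus> b [^] Suc m) \<oplus> (\<one> \<ominus> b [^] m)"
      using ax[of "b [^] m"] b nat_pow_comm[of b m 1] by simp
    also have "\<dots> = \<one> \<ominus> b [^] Suc m"
      using b by (metis (no_types, opaque_lifting) a_comm a_inv_closed a_lcomm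
    a_minus_def add.inv_solve_left' minus_closed one_closed nat_pow_closed)
    finally show ?case .
  qed
  from this[of k] show ?thesis using bk b by (intro bexI[of _ "\<Oplus>i\<in>{..<k}. b [^] i"]) (auto simp: minus_eq)
qed


lemma nilpotent_trace:
  fixes A :: "'a::field mat"
  assumes A: "A \<in> carrier_mat n n" and Ak: "A ^\<^sub>m k = 0\<^sub>m n n"
  shows "(\<Sum>i<n. A $$ (i,i)) = 0"
proof -
  interpret h: semiring_hom "\<lambda>a::'a. [:a:]"
    by unfold_locales (auto simp: one_pCons)
  define A' where "A' = map_mat (\<lambda>a. [:a:]) A"
  define B where "B = [:0,1:] \<cdot>\<^sub>m A'"
  define M where "M = mat n n (\<lambda>(i,j). [:of_bool (i=j), - A $$ (i,j):])"
  have A'c: "A' \<in> carrier_mat n n" using A unfolding A'_def by simp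
  have Bc: "B \<in> carrier_mat n n" using A'c unfolding B_def by simp
  have Mc: "M \<in> carrier_mat n n" unfolding M_def by simp
  have MB: "M + B = 1\<^sub>m n"
    by (rule eq_matI) (use A in \<open>auto simp: M_def B_def A'_def\<close>)
  have Bpow: "B ^\<^sub>m m = [:0,1:]^m \<cdot>\<^sub>m (A' ^\<^sub>m m)" for m
  proof (induction m)
    case 0 then show ?case using A'c Bc by (auto intro!: eq_matI)
  next
    case (Suc m)
    have "B ^\<^sub>m Suc m = ([:0,1:]^m \<cdot>\<^sub>m (A' ^\<^sub>m m)) * ([:0,1:] \<cdot>\<^sub>m A')"
      using Suc by (simp add: B_def)
    also have "\<dots> = [:0,1:]^Suc m \<cdot>\<^sub>m (A' ^\<^sub>m Suc m)"
      using A'c by (intro eq_matI) (auto simp: scalar_prod_def sum_distrib_left ac_simps)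
    finally show ?case .
  qed
  have "A' ^\<^sub>m k = 0\<^sub>m n n"
    unfolding A'_def h.mat_hom_pow[OF A, symmetric] Ak by (auto intro!: eq_matI)
  then have "B ^\<^sub>m k = 0\<^sub>m n n" using Bpow[of k] by (auto intro!: eq_matI)
  then have Bk: "B [^]\<^bsub>ring_mat TYPE('a poly) n ()\<^esub> k = \<zero>\<^bsub>ring_mat TYPE('a poly) n ()\<^esub>"
    using pow_mat_ring_pow[OF Bc, of k "()"] by (simp add: ring_mat_simps)
  interpret R: ring "ring_mat TYPE('a poly) n ()" by (rule ring_mat)
  obtain c where c: "c \<in> carrier_mat n n" and Mcc: "M * c = 1\<^sub>m n"
    using R.nil_right_inv[of M B k] Mc Bc MB Bk by (auto simp: ring_mat_simps)
  have "det M * det c = 1" using det_mult[OF Mc c] Mcc by simp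
  then have "det M dvd 1" by (metis dvdI)
  then obtain e where "det M = [:e:]" using is_unit_poly_iff by blast
  then have "coeff (det M) 1 = 0" by simp
  then show ?thesis using det_coeff1[of n A] unfolding M_def by simp
qed


lemma nil_trace0:
  assumes "nilpotent_elem (ring_mat TYPE('a::field) n ()) a"
  shows "a \<in> carrier_mat n n \<and> (\<Sum>i<n. a $$ (i,i)) = 0"
proof -
  from assms obtain k where a: "a \<in> carrier_mat n n"
    and k: "a [^]\<^bsub>ring_mat TYPE('a) n ()\<^esub> (k::nat) = \<zero>\<^bsub>ring_mat TYPE('a) n ()\<^esub>"
    unfolding nilpotent_elem_def by (auto simp: ring_mat_simps)
  have "a ^\<^sub>m k = 0\<^sub>m n n" using k pow_mat_ring_pow[OF a, of k "()"] by (simp add: ring_mat_simps)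
  then show ?thesis using nilpotent_trace[OF a] a by blast
qed

theorem mainTheorem6:
  fixes n :: nat
  assumes "n \<ge> 2"
  shows "\<not> two_nil_sum (ring_mat TYPE('a::field) n ())"
proof
  assume T: "two_nil_sum (ring_mat TYPE('a::field) n ())"
  define E :: "'a mat" where "E = mat n n (\<lambda>(i,j). if i=0 \<and> j=0 then 1 else 0)"
  have Ec: "E \<in> carrier_mat n n" unfolding E_def by simp
  have nu: "\<not> central_unit (ring_mat TYPE('a) n ()) E"
  proof
    assume "central_unit (ring_mat TYPE('a) n ()) E"
    then obtain y where y: "y \<in> carrier_mat n n" and Ey: "E * y = 1\<^sub>m n"
      unfolding central_unit_def Units_def by (auto simp: ring_mat_simps)
    have "(E * y) $$ (1,1) = 0" using assms y
      by (auto simp: E_def scalar_prod_def intro!: sum.neutral)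
    moreover have "(1\<^sub>m n :: 'a mat) $$ (1,1) = 1" using assms by simp
    ultimately show False using Ey by simp
  qed
  then obtain a b where a: "nilpotent_elem (ring_mat TYPE('a) n ()) a"
    and b: "nilpotent_elem (ring_mat TYPE('a) n ()) b" and Eab: "E = a + b"
    using T Ec unfolding two_nil_sum_def by (auto simp: ring_mat_simps)
  from nil_trace0[OF a] nil_trace0[OF b]
  have ac: "a \<in> carrier_mat n n" and bc: "b \<in> carrier_mat n n"
    and ta: "(\<Sum>i<n. a $$ (i,i)) = 0" and tb: "(\<Sum>i<n. b $$ (i,i)) = 0" by auto
  have "(\<Sum>i<n. E $$ (i,i)) = (\<Sum>i<n. a $$ (i,i)) + (\<Sum>i<n. b $$ (i,i))"
    unfolding Eab sum.distrib[symmetric] using ac bc by (intro sum.cong) auto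
  also have "\<dots> = 0" using ta tb by simp
  finally have z: "(\<Sum>i<n. E $$ (i,i)) = 0" .
  have "(\<Sum>i<n. E $$ (i,i)) = (\<Sum>i<n. if i = 0 then 1 else 0)"
    by (intro sum.cong) (auto simp: E_def)
  also have "\<dots> = 1" using assms by simp
  finally show False using z by simp
qed

end
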